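(* Let $X$ be a nonempty set and $d$ a triangular symmetric on $X$ such that $(X,d)$ is 0-complete. Let $T:X\to X$, $G\in\{M_1,M_2\}$, and suppose $d(Tx,Ty)\le\varphi(G(x,y))$ for all $x,y\in X$, for some asymptotic normal function $\varphi:[0,\infty)\to[0,\infty)$. Then $T$ is $d$-asymptotic, i.e. $\lim_n d(T^nx,T^{n+1}x)=0$ for every $x\in X$.
   Context: A symmetric on $X$ is a map $d:X\times X\to[0,\infty)$ with $d(x,y)=d(y,x)$; it is triangular if $d(x,z)\le d(x,y)+d(y,z)$ for all $x,y,z$. A sequence $(x_n)$ $0d$-converges to $x$ if $d(x_n,x)\to0$; it is $0d$-Cauchy if for every $\varepsilon>0$ there is $j$ with $d(x_m,x_n)<\varepsilon$ whenever $j\le m<n$; $(X,d)$ is 0-complete if every $0d$-Cauchy sequence $0d$-converges to some point. Notation: $M_1(x,y)=d(x,y)$, $H(x,y)=\max\{d(x,Tx),d(y,Ty)\}$, $M_2=\max\{M_1,H\}$. $\varphi$ is normal if $\varphi(0)=0$ and $\varphi(t)<t$ for $t>0$; asymptotic normal if normal and every sequence $(r_n)$ in $[0,\infty)$ with $r_{n+1}\le\varphi(r_n)$ for all $n$ tends to $0$. *)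

theory Defs
  imports "HOL-Analysis.Analysis"
begin

definition symmetric_on :: "'a set \<Rightarrow> ('a \<Rightarrow> 'a \<Rightarrow> real) \<Rightarrow> bool" where
  "symmetric_on X d \<longleftrightarrow> (\<forall>x\<in>X. \<forall>y\<in>X. d x y \<ge> 0 \<and> d x y = d y x)"

definition triangular_on :: "'a set \<Rightarrow> ('a \<Rightarrow> 'a \<Rightarrow> real) \<Rightarrow> bool" where
  "triangular_on X d \<longleftrightarrow> (\<forall>x\<in>X. \<forall>y\<in>X. \<forall>z\<in>X. d x z \<le> d x y + d y z)"

definition zero_d_converges :: "('a \<Rightarrow> 'a \<Rightarrow> real) \<Rightarrow> (nat \<Rightarrow> 'a) \<Rightarrow> 'a \<Rightarrow> bool" where
  "zero_d_converges d s x \<longleftrightarrow> (\<lambda>n. d (s n) x) \<longlonglongrightarrow> 0"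

definition zero_d_Cauchy :: "('a \<Rightarrow> 'a \<Rightarrow> real) \<Rightarrow> (nat \<Rightarrow> 'a) \<Rightarrow> bool" where
  "zero_d_Cauchy d s \<longleftrightarrow> (\<forall>\<epsilon>>0. \<exists>j. \<forall>m n. j \<le> m \<and> m < n \<longrightarrow> d (s m) (s n) < \<epsilon>)"

definition zero_complete :: "'a set \<Rightarrow> ('a \<Rightarrow> 'a \<Rightarrow> real) \<Rightarrow> bool" where
  "zero_complete X d \<longleftrightarrow> (\<forall>s. (\<forall>n. s n \<in> X) \<and> zero_d_Cauchy d s \<longrightarrow> (\<exists>x\<in>X. zero_d_converges d s x))"

definition M1 :: "('a \<Rightarrow> 'a \<Rightarrow> real) \<Rightarrow> ('a \<Rightarrow> 'a) \<Rightarrow> 'a \<Rightarrow> 'a \<Rightarrow> real" where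
  "M1 d T x y = d x y"

definition H :: "('a \<Rightarrow> 'a \<Rightarrow> real) \<Rightarrow> ('a \<Rightarrow> 'a) \<Rightarrow> 'a \<Rightarrow> 'a \<Rightarrow> real" where
  "H d T x y = max (d x (T x)) (d y (T y))"

definition M2 :: "('a \<Rightarrow> 'a \<Rightarrow> real) \<Rightarrow> ('a \<Rightarrow> 'a) \<Rightarrow> 'a \<Rightarrow> 'a \<Rightarrow> real" where
  "M2 d T x y = max (M1 d T x y) (H d T x y)"

definition normal_fun :: "(real \<Rightarrow> real) \<Rightarrow> bool" where
  "normal_fun \<phi> \<longleftrightarrow> \<phi> 0 = 0 \<and> (\<forall>t>0. \<phi> t < t)"

definition asymptotic_normal :: "(real \<Rightarrow> real) \<Rightarrow> bool" where
  "asymptotic_normal \<phi> \<longleftrightarrow> normal_fun \<phi> \<and>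
     (\<forall>r::nat \<Rightarrow> real. (\<forall>n. r n \<ge> 0) \<and> (\<forall>n. r (Suc n) \<le> \<phi> (r n)) \<longrightarrow> r \<longlonglongrightarrow> 0)"

definition d_asymptotic :: "'a set \<Rightarrow> ('a \<Rightarrow> 'a \<Rightarrow> real) \<Rightarrow> ('a \<Rightarrow> 'a) \<Rightarrow> bool" where
  "d_asymptotic X d T \<longleftrightarrow> (\<forall>x\<in>X. (\<lambda>n. d ((T ^^ n) x) ((T ^^ Suc n) x)) \<longlonglongrightarrow> 0)"

end

theory Submission
  imports Defs
begin

theorem lemma5:
  fixes X :: "'a set" and d :: "'a \<Rightarrow> 'a \<Rightarrow> real" and T :: "'a \<Rightarrow> 'a"
    and G :: "('a \<Rightarrow> 'a \<Rightarrow> real) \<Rightarrow> ('a \<Rightarrow> 'a) \<Rightarrow> 'a \<Rightarrow> 'a \<Rightarrow> real"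
    and \<phi> :: "real \<Rightarrow> real"
  assumes "X \<noteq> {}"
    and "symmetric_on X d" and "triangular_on X d" and "zero_complete X d"
    and "\<forall>x\<in>X. T x \<in> X"
    and "G \<in> {M1, M2}"
    and "\<forall>t\<ge>0. \<phi> t \<ge> 0"
    and "asymptotic_normal \<phi>"
    and "\<forall>x\<in>X. \<forall>y\<in>X. d (T x) (T y) \<le> \<phi> (G d T x y)"
  shows "d_asymptotic X d T"
proof -
  have nf: "\<phi> 0 = 0" "\<And>t. t > 0 \<Longrightarrow> \<phi> t < t" using assms(8) unfolding asymptotic_normal_def normal_fun_def by auto
  have asy: "\<And>r::nat\<Rightarrow>real. (\<forall>n. r n \<ge> 0) \<Longrightarrow> (\<forall>n. r (Suc n) \<le> \<phi> (r n)) \<Longrightarrow> r \<longlonglongrightarrow> 0"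
    using assms(8) unfolding asymptotic_normal_def by blast
  show ?thesis unfolding d_asymptotic_def
  proof
    fix x assume x: "x \<in> X"
    define s where "s n = (T ^^ n) x" for n
    have sX: "s n \<in> X" for n by (induction n) (use x assms(5) in \<open>auto simp: s_def\<close>)
    have sS: "s (Suc n) = T (s n)" for n by (simp add: s_def)
    define r where "r n = d (s n) (s (Suc n))" for n
    have r0: "r n \<ge> 0" for n using assms(2) sX unfolding symmetric_on_def r_def by blast
    have key: "r (Suc n) \<le> \<phi> (G d T (s n) (s (Suc n)))" for n
      using assms(9) sX sS unfolding r_def by metis
    have step: "r (Suc n) \<le> \<phi> (r n)" for n
    proof (cases "G = M1")
      case True
      then show ?thesis using key[of n] by (simp add: M1_def r_def)
    next
      case False
      then have G: "G = M2" using assms(6) by auto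
      have eq: "G d T (s n) (s (Suc n)) = max (r n) (r (Suc n))"
        unfolding G M2_def M1_def H_def r_def sS by simp
      have "r (Suc n) \<le> r n"
      proof (rule ccontr)
        assume "\<not> ?thesis"
        then have "r (Suc n) > r n" by simp
        then have "r (Suc n) > 0" "max (r n) (r (Suc n)) = r (Suc n)" using r0[of n] by auto
        then show False using key[of n] eq nf(2)[of "r (Suc n)"] by auto
      qed
      then show ?thesis using key[of n] eq by (simp add: max_def)
    qed
    have "r \<longlonglongrightarrow> 0" using asy r0 step by blast
    then show "(\<lambda>n. d ((T ^^ n) x) ((T ^^ Suc n) x)) \<longlonglongrightarrow> 0"
      unfolding r_def s_def by simp
  qed
qed

end
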